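(* Let $m \geq 2$, let $D \subset \mathbb{R}^m$ be a domain, and let $u \in C^2(D)$ be harmonic in $D$ (i.e. $\nabla^2 u = 0$ in $D$). Then for every $x \in D$ and every $r > 0$ such that the closed ball $\overline{B_r(x)} = \{y : |y-x| \le r\}$ is contained in $D$, \[ u(x) = \frac{m}{|B_r|} \int_{B_r(x)} u(y) \log \frac{r}{|x-y|} \, \mathrm{d}y , \] where $B_r(x) = \{y : |y-x| < r\}$ and $|B_r|$ denotes its Lebesgue measure.
   Context: $|B_r| = \omega_m r^m / m$ with $\omega_m = 2\pi^{m/2}/\Gamma(m/2)$ the surface area of the unit sphere in $\mathbb{R}^m$. *)

theory Defs
  imports "HOL-Analysis.Analysis"
begin

definition C2_on :: "'a::euclidean_space set \<Rightarrow> ('a \<Rightarrow> real) \<Rightarrow> bool" where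
  "C2_on D u \<longleftrightarrow>
     (\<exists>Du :: 'a \<Rightarrow> ('a \<Rightarrow>\<^sub>L real). \<exists>D2u :: 'a \<Rightarrow> ('a \<Rightarrow>\<^sub>L ('a \<Rightarrow>\<^sub>L real)).
        (\<forall>y\<in>D. (u has_derivative blinfun_apply (Du y)) (at y)) \<and>
        (\<forall>y\<in>D. (Du has_derivative blinfun_apply (D2u y)) (at y)) \<and>
        continuous_on D D2u)"

definition laplacian :: "('a::euclidean_space \<Rightarrow> real) \<Rightarrow> 'a \<Rightarrow> real" where
  "laplacian u y =
     (\<Sum>i\<in>Basis. frechet_derivative (\<lambda>z. frechet_derivative u (at z) i) (at y) i)"

definition harmonic_on :: "'a::euclidean_space set \<Rightarrow> ('a \<Rightarrow> real) \<Rightarrow> bool" where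
  "harmonic_on D u \<longleftrightarrow> C2_on D u \<and> (\<forall>y\<in>D. laplacian u y = 0)"

end

theory Submission
  imports Defs
begin
lemma R1: fixes s :: real assumes "0 < s" "s \<le> 1" shows "s * (- ln s) \<le> 2 * sqrt s"
proof -
  have sq: "sqrt s > 0" using assms by simp
  have "ln (1 / sqrt s) \<le> 1 / sqrt s - 1" using sq by (intro ln_le_minus_one) simp
  moreover have "ln (1 / sqrt s) = - ln s / 2"
    using assms by (simp add: ln_div ln_sqrt)
  ultimately have "- ln s \<le> 2 / sqrt s" by simp
  hence "s * (- ln s) \<le> s * (2 / sqrt s)" using assms by (intro mult_left_mono) auto
  also have "s * (2 / sqrt s) = 2 * sqrt s" using sq assms
    by (metis (no_types, lifting) divide_divide_eq_left divide_self_if mult.commute nonzero_mult_div_cancel_left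
        real_div_sqrt order.strict_iff_not times_divide_eq_left)
  finally show ?thesis .
qed

lemma deriv_zero_by_bound:
  fixes f :: "'a::real_normed_vector \<Rightarrow> real"
  assumes "d > 0" "\<And>y. norm (y - p) < d \<Longrightarrow> \<bar>f y - f p\<bar> \<le> C * (norm (y - p) * sqrt (norm (y - p)))"
  shows "(f has_derivative (\<lambda>v. 0)) (at p)"
  unfolding has_derivative_at_alt
proof (intro conjI allI impI)
  show "bounded_linear (\<lambda>v::'a. 0::real)" by simp
  fix e :: real assume e: "e > 0"
  define K where "K = \<bar>C\<bar> + 1"
  have K: "K > 0" unfolding K_def by simp
  define d' where "d' = min d ((e / K)^2)"
  have d': "d' > 0" using assms e K by (simp add: d'_def)
  show "\<exists>d>0. \<forall>y. norm (y - p) < d \<longrightarrow> norm (f y - f p - 0) \<le> e * norm (y - p)"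
  proof (intro exI[of _ d'] conjI allI impI d')
    fix y assume y: "norm (y - p) < d'"
    define n where "n = norm (y - p)"
    have n0: "n \<ge> 0" by (simp add: n_def)
    have "sqrt n \<le> e / K"
    proof -
      have "n \<le> (e/K)^2" using y by (simp add: n_def d'_def)
      hence "sqrt n \<le> sqrt ((e/K)^2)" by (rule real_sqrt_le_mono)
      also have "\<dots> = e / K" using e K by simp
      finally show ?thesis .
    qed
    have "\<bar>f y - f p\<bar> \<le> C * (n * sqrt n)" using assms(2)[of y] y by (simp add: n_def d'_def)
    also have "\<dots> \<le> K * (n * sqrt n)" unfolding K_def using n0 
      by (intro mult_right_mono) auto
    also have "\<dots> \<le> K * (n * (e / K))" using K n0 \<open>sqrt n \<le> e / K\<close>
      by (intro mult_left_mono) (auto intro: mult_left_mono)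
    also have "\<dots> = e * n" using K by simp
    finally show "norm (f y - f p - 0) \<le> e * norm (y - p)" by (simp add: n_def)
  qed
qed

lemma deriv_zero_mult:
  fixes f g :: "'a::real_normed_vector \<Rightarrow> real"
  assumes f: "(f has_derivative (\<lambda>v. 0)) (at p)" and f0: "f p = 0" and g: "continuous (at p) g"
  shows "((\<lambda>y. f y * g y) has_derivative (\<lambda>v. 0)) (at p)"
  unfolding has_derivative_at_alt
proof (intro conjI allI impI)
  show "bounded_linear (\<lambda>v::'a. 0::real)" by simp
  fix e :: real assume e: "e > 0"
  define M where "M = \<bar>g p\<bar> + 1"
  have M: "M > 0" by (simp add: M_def add_pos_nonneg)
  obtain d1 where d1: "d1 > 0" "\<And>y. dist y p < d1 \<Longrightarrow> dist (g y) (g p) < 1"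
    using g unfolding continuous_at_eps_delta by (meson zero_less_one)
  obtain d2 where d2: "d2 > 0" "\<And>y. norm (y - p) < d2 \<Longrightarrow> norm (f y - f p - 0) \<le> (e / M) * norm (y - p)"
    using f e M unfolding has_derivative_at_alt by (meson divide_pos_pos)
  show "\<exists>d>0. \<forall>y. norm (y - p) < d \<longrightarrow> norm (f y * g y - f p * g p - 0) \<le> e * norm (y - p)"
  proof (intro exI[of _ "min d1 d2"] conjI allI impI)
    show "min d1 d2 > 0" using d1 d2 by simp
    fix y assume y: "norm (y - p) < min d1 d2"
    have gy: "\<bar>g y\<bar> \<le> M" using d1(2)[of y] y unfolding M_def by (auto simp: dist_norm)
    have fy: "\<bar>f y\<bar> \<le> (e / M) * norm (y - p)" using d2(2)[of y] y f0 by simp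
    have "norm (f y * g y - f p * g p - 0) = \<bar>f y\<bar> * \<bar>g y\<bar>" using f0 by (simp add: abs_mult)
    also have "\<dots> \<le> ((e / M) * norm (y - p)) * M" using fy gy
      by (intro mult_mono) auto
    also have "\<dots> = e * norm (y - p)" using M by simp
    finally show "norm (f y * g y - f p * g p - 0) \<le> e * norm (y - p)" .
  qed
qed

definition Lam :: "'a::real_normed_vector \<Rightarrow> real" where
  "Lam z = - ln (min 1 (norm z))"

lemma Lam_out: "norm z \<ge> 1 \<Longrightarrow> Lam z = 0"
  by (simp add: Lam_def)

lemma Lam_in: "norm z < 1 \<Longrightarrow> Lam z = - ln (norm z)"
  by (simp add: Lam_def)

lemma Lam_nonneg: "Lam z \<ge> 0"
proof (cases "z = 0")
  case False
  then show ?thesis by (simp add: Lam_def)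
qed (simp add: Lam_def)

lemma Lam_bound: "norm z < 1 \<Longrightarrow> Lam z * norm z \<le> 2 * sqrt (norm z)"
proof (cases "z = 0")
  case False
  assume "norm z < 1"
  then show ?thesis using R1[of "norm z"] False by (simp add: Lam_in mult.commute)
qed simp

lemma Lam_cont: "continuous (at z) (\<lambda>z. Lam z *\<^sub>R z)"
proof (cases "z = 0")
  case False
  have "continuous (at z) (\<lambda>z. (- ln (min 1 (norm z))) *\<^sub>R z)"
    using False by (intro continuous_intros) (auto simp: min_def)
  then show ?thesis unfolding Lam_def .
next
  case True
  have ev: "\<forall>\<^sub>F x in at (0::'a). norm (Lam x *\<^sub>R x) \<le> 2 * sqrt (norm x)"
    unfolding eventually_at
    by (intro exI[of _ 1]) (auto simp: Lam_bound Lam_nonneg dist_norm)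
  have lim: "((\<lambda>x. 2 * sqrt (norm x)) \<longlongrightarrow> 0) (at (0::'a))"
    by (rule tendsto_eq_intros refl | simp)+
  have "((\<lambda>y. Lam y *\<^sub>R y) \<longlongrightarrow> 0) (at (0::'a))"
    by (rule Lim_null_comparison[OF ev lim])
  then show ?thesis using True by (simp add: continuous_at)
qed

lemma Lam_cont_on: "continuous_on S (\<lambda>z. Lam z *\<^sub>R z)"
  using Lam_cont by (blast intro: continuous_at_imp_continuous_on)

lemma le_sqrt_self: fixes n :: real assumes "0 \<le> n" "n \<le> 1" shows "n \<le> sqrt n"
proof -
  have "n * n \<le> n * 1" using assms by (intro mult_left_mono) auto
  then have "sqrt (n^2) \<le> sqrt n" by (intro real_sqrt_le_mono) (simp add: power2_eq_square)
  then show ?thesis using assms by simp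
qed

definition psi :: "real \<Rightarrow> real" where "psi q = (1 - q + q * ln q) / 4"

definition Vf :: "'a::real_normed_vector \<Rightarrow> real" where
  "Vf z = psi (min 1 (norm z ^ 2))"

lemma psi_upper: assumes "0 \<le> q" "q \<le> 1" shows "psi q \<le> (1 - q)^2 / 4"
proof (cases "q = 0")
  case False
  then have "ln q \<le> q - 1" using assms by (intro ln_le_minus_one) simp
  then have "q * ln q \<le> q * (q - 1)" using assms by (intro mult_left_mono) auto
  then have "(1 - q + q * ln q) / 4 \<le> (1 - q + q * (q - 1)) / 4" by simp
  also have "\<dots> = (1 - q)^2 / 4" by (simp add: power2_eq_square algebra_simps)
  finally show ?thesis unfolding psi_def .
qed (simp add: psi_def)

lemma psi_lower: assumes "0 \<le> q" "q \<le> 1" shows "0 \<le> psi q"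
proof (cases "q = 0")
  case False
  then have q: "q > 0" using assms by simp
  have "ln (1/q) \<le> 1/q - 1" using q by (intro ln_le_minus_one) simp
  then have "- ln q \<le> 1/q - 1" using q by (simp add: ln_div)
  then have "q * (- ln q) \<le> q * (1/q - 1)" using q by (intro mult_left_mono) auto
  then show ?thesis using q unfolding psi_def by (simp add: algebra_simps)
qed (simp add: psi_def)

lemma psi_deriv: "q > 0 \<Longrightarrow> (psi has_real_derivative (ln q / 4)) (at q)"
  unfolding psi_def
  by (rule derivative_eq_intros refl | simp)+ 

lemma Vf_deriv:
  fixes z :: "'a::euclidean_space"
  shows "(Vf has_derivative (\<lambda>v. - Lam z * (z \<bullet> v))) (at z)"
proof -
  consider "z = 0" | "0 < norm z \<and> norm z < 1" | "norm z = 1" | "norm z > 1"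
    by (metis linorder_neqE_linordered_idom norm_eq_zero norm_ge_zero order.not_eq_order_implies_strict)
  then show ?thesis
  proof cases
    case 1
    have "(Vf has_derivative (\<lambda>v. 0)) (at z)"
    proof (rule deriv_zero_by_bound[where d=1 and C=2])
      fix y :: 'a assume y: "norm (y - z) < 1"
      define n where "n = norm y"
      have n: "0 \<le> n" "n < 1" using y 1 by (auto simp: n_def)
      have Vy: "Vf y = psi (n^2)" using n by (simp add: Vf_def n_def power_le_one)
      have V0: "Vf z = 1/4" using 1 by (simp add: Vf_def psi_def)
      have sq: "n \<le> sqrt n" using n by (intro le_sqrt_self) auto
      have "\<bar>Vf y - Vf z\<bar> \<le> 2 * (n * sqrt n)"
      proof (cases "n = 0")
        case True then show ?thesis using Vy V0 by (simp add: psi_def)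
      next
        case False
        then have np: "n > 0" using n by simp
        have l2: "ln (n^2) = 2 * ln n" using np by (simp add: ln_realpow)
        have "Vf y - Vf z = (- (n^2) + n^2 * (2 * ln n)) / 4"
          using Vy V0 np l2 by (simp add: psi_def algebra_simps)
        moreover have a: "n * (n * ln n) \<le> 0" using np n
          by (intro mult_nonneg_nonpos) (auto intro!: mult_nonneg_nonpos)
        ultimately have "Vf y - Vf z = (- (n * n) + 2 * (n * (n * ln n))) / 4"
          by (simp add: power2_eq_square algebra_simps)
        then have "\<bar>Vf y - Vf z\<bar> = (n * n - 2 * (n * (n * ln n))) / 4"
        proof -
          assume E: "Vf y - Vf z = (- (n * n) + 2 * (n * (n * ln n))) / 4"
          have aux: "\<And>(A::real) (B::real) (X::real). A \<le> 0 \<Longrightarrow> 0 \<le> B \<Longrightarrow> X = (- B + 2 * A) / 4 \<Longrightarrow> \<bar>X\<bar> = (B - 2 * A) / 4"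
            by (simp add: abs_if)
          show ?thesis by (rule aux[OF a zero_le_square E])
        qed
        also have "\<dots> = (n^2 + 2 * n * (n * (- ln n))) / 4" by (simp add: power2_eq_square algebra_simps)
        finally have "\<bar>Vf y - Vf z\<bar> \<le> (n^2 + 2 * n * (n * (- ln n))) / 4" by simp
        also have "\<dots> \<le> (n * sqrt n + 2 * n * (2 * sqrt n)) / 4"
          using R1[of n] np n sq
          by (intro divide_right_mono add_mono mult_left_mono) (auto simp: power2_eq_square mult_left_mono)
        also have "\<dots> \<le> 2 * (n * sqrt n)" using n by simp
        finally show ?thesis .
      qed
      then show "\<bar>Vf y - Vf z\<bar> \<le> 2 * (norm (y - z) * sqrt (norm (y - z)))"
        using 1 by (simp add: n_def)
    qed simp
    then show ?thesis using 1 by simp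
  next
    case 2
    define q where "q = norm z ^ 2"
    have q: "0 < q" "q < 1" using 2 by (auto simp: q_def power_less_one_iff)
    have n2: "((\<lambda>y::'a. norm y ^ 2) has_derivative (\<lambda>v. 2 * (z \<bullet> v))) (at z)"
      unfolding power2_norm_eq_inner
      by (rule derivative_eq_intros refl | simp add: inner_commute)+
    have "((\<lambda>y. psi (norm y ^ 2)) has_derivative (\<lambda>v. (ln q / 4) * (2 * (z \<bullet> v)))) (at z)"
      using has_derivative_compose[OF n2, of psi "(*) (ln q / 4)"] psi_deriv[OF q(1)]
      by (simp add: has_field_derivative_def q_def)
    then have "(Vf has_derivative (\<lambda>v. (ln q / 4) * (2 * (z \<bullet> v)))) (at z)"
    proof (rule has_derivative_transform_within_open[where s="ball 0 1"])
      show "z \<in> ball 0 1" using 2 by simp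
      fix y :: 'a assume "y \<in> ball 0 1"
      then show "psi (norm y ^ 2) = Vf y" by (simp add: Vf_def power_le_one)
    qed simp
    moreover have "(\<lambda>v. (ln q / 4) * (2 * (z \<bullet> v))) = (\<lambda>v. - Lam z * (z \<bullet> v))"
      using 2 by (simp add: Lam_in q_def ln_realpow)
    ultimately show ?thesis by simp
  next
    case 3
    have "(Vf has_derivative (\<lambda>v. 0)) (at z)"
    proof (rule deriv_zero_by_bound[where d=1 and C=1])
      fix y :: 'a assume y: "norm (y - z) < 1"
      define n where "n = norm (y - z)"
      have n: "0 \<le> n" "n < 1" using y by (auto simp: n_def)
      have Vz: "Vf z = 0" using 3 by (simp add: Vf_def psi_def)
      define Q where "Q = min 1 (norm y ^ 2)"
      have Q: "0 \<le> Q" "Q \<le> 1" by (auto simp: Q_def)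
      have "1 - Q \<le> 2 * n"
      proof (cases "norm y \<ge> 1")
        case True then show ?thesis using n by (simp add: Q_def power_le_one_iff)
      next
        case False
        then have "Q = norm y ^ 2" by (simp add: Q_def power_le_one)
        moreover have "1 - norm y \<le> n" using 3 norm_triangle_ineq3[of z y]
          by (simp add: n_def norm_minus_commute)
        ultimately have "1 - Q = (1 - norm y) * (1 + norm y)" by (simp add: power2_eq_square algebra_simps)
        also have "\<dots> \<le> n * 2" using False \<open>1 - norm y \<le> n\<close>
          by (intro mult_mono) auto
        finally show ?thesis by simp
      qed
      moreover have "0 \<le> 1 - Q" using Q by simp
      ultimately have "(1 - Q)^2 \<le> (2 * n)^2" by (intro power_mono) auto
      have "\<bar>Vf y - Vf z\<bar> = psi Q" using Vz psi_lower[OF Q] by (simp add: Vf_def Q_def)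
      also have "\<dots> \<le> (1 - Q)^2 / 4" by (rule psi_upper[OF Q])
      also have "\<dots> \<le> n^2" using \<open>(1 - Q)^2 \<le> (2 * n)^2\<close> by (simp add: power_mult_distrib)
      also have "\<dots> \<le> n * sqrt n" using n le_sqrt_self[of n]
        by (simp add: power2_eq_square mult_left_mono)
      finally show "\<bar>Vf y - Vf z\<bar> \<le> 1 * (norm (y - z) * sqrt (norm (y - z)))" by (simp add: n_def)
    qed simp
    then show ?thesis using 3 by (simp add: Lam_out)
  next
    case 4
    have "((\<lambda>y. 0::real) has_derivative (\<lambda>v. 0)) (at z)" by simp
    then have "(Vf has_derivative (\<lambda>v. 0)) (at z)"
    proof (rule has_derivative_transform_within_open[where s="{y. 1 < norm y}"])
      show "z \<in> {y. 1 < norm y}" using 4 by simp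
      show "open {y::'a. 1 < norm y}" by (intro open_Collect_less continuous_intros)
      fix y :: 'a assume "y \<in> {y. 1 < norm y}"
      then show "0 = Vf y" by (simp add: Vf_def psi_def min_def)
    qed
    then show ?thesis using 4 by (simp add: Lam_out)
  qed
qed

lemma ibp:
  fixes h :: "'a::euclidean_space \<Rightarrow> real" and h' :: "'a \<Rightarrow> 'a \<Rightarrow> real"
  assumes hd: "\<And>z. (h has_derivative h' z) (at z)"
    and hc: "continuous_on UNIV (\<lambda>z. h' z e)"
    and h0: "\<And>z. norm z \<ge> 1 \<Longrightarrow> h z = 0"
    and e: "e \<in> Basis"
  shows "integral (cbox (-(2 *\<^sub>R One)) (2 *\<^sub>R One)) (\<lambda>z. h' z e) = 0"
proof -
  define Bx :: "'a set" where "Bx = cbox (-(2 *\<^sub>R One)) (2 *\<^sub>R One)"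
  have hcont: "continuous_on S h" for S
    using hd by (meson continuous_at_imp_continuous_on has_derivative_continuous)
  define I0 where "I0 = integral UNIV h"
  have box: "(h has_integral I0) (cbox a b)" if ab: "ball 0 1 \<subseteq> cbox a b" for a b
  proof -
    have "(h has_integral integral (cbox a b) h) (cbox a b)"
      by (intro integrable_integral integrable_continuous hcont)
    then have U: "(h has_integral integral (cbox a b) h) UNIV"
    proof (rule has_integral_on_superset)
      fix x assume "x \<notin> cbox a b"
      then have "norm x \<ge> 1" using ab by (auto simp: subset_iff dist_norm) (meson not_le)
      then show "h x = 0" by (rule h0)
    qed simp
    have "I0 = integral (cbox a b) h" unfolding I0_def using U by (rule integral_unique)
    then show ?thesis using \<open>(h has_integral integral (cbox a b) h) (cbox a b)\<close> by simp
  qed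
  have eB: "\<bar>e \<bullet> i\<bar> \<le> 1" if "i \<in> Basis" for i
    using e that by (auto simp: inner_Basis)
  have Hc: "integral Bx (\<lambda>z. h (z + t *\<^sub>R e)) = I0" if t: "t \<in> {-1<..<1}" for t
  proof -
    have sub: "ball 0 1 \<subseteq> cbox (-(2 *\<^sub>R One) + t *\<^sub>R e) (2 *\<^sub>R One + t *\<^sub>R e)"
    proof
      fix z :: 'a assume z: "z \<in> ball 0 1"
      show "z \<in> cbox (-(2 *\<^sub>R One) + t *\<^sub>R e) (2 *\<^sub>R One + t *\<^sub>R e)"
        unfolding mem_box
      proof (intro ballI conjI)
        fix i :: 'a assume i: "i \<in> Basis"
        have zi: "\<bar>z \<bullet> i\<bar> < 1" using Basis_le_norm[OF i, of z] z by simp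
        have "\<bar>t * (e \<bullet> i)\<bar> = \<bar>t\<bar> * \<bar>e \<bullet> i\<bar>" by (simp add: abs_mult)
        also have "\<dots> \<le> \<bar>t\<bar> * 1" by (rule mult_left_mono[OF eB[OF i]]) simp
        also have "\<dots> < 1" using t by auto
        finally have ti: "\<bar>t * (e \<bullet> i)\<bar> < 1" .
        have a1: "(- (2 *\<^sub>R One) + t *\<^sub>R e) \<bullet> i = t * (e \<bullet> i) - 2" using i by (simp add: inner_simps)
        have a2: "(2 *\<^sub>R One + t *\<^sub>R e) \<bullet> i = t * (e \<bullet> i) + 2" using i by (simp add: inner_simps)
        show "(- (2 *\<^sub>R One) + t *\<^sub>R e) \<bullet> i \<le> z \<bullet> i" unfolding a1 using zi ti by arith
        show "z \<bullet> i \<le> (2 *\<^sub>R One + t *\<^sub>R e) \<bullet> i" unfolding a2 using zi ti by arith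
      qed
    qed
    have "((\<lambda>z. h (1 *\<^sub>R z + t *\<^sub>R e)) has_integral (I0 /\<^sub>R 1 ^ DIM('a)))
           (cbox (((-(2 *\<^sub>R One) + t *\<^sub>R e) - t *\<^sub>R e) /\<^sub>R 1) (((2 *\<^sub>R One + t *\<^sub>R e) - t *\<^sub>R e) /\<^sub>R 1))"
      by (rule has_integral_affinity'[OF box[OF sub]]) simp
    then have "((\<lambda>z. h (z + t *\<^sub>R e)) has_integral I0) Bx" by (simp add: Bx_def)
    then show ?thesis by (rule integral_unique)
  qed
  have der: "((\<lambda>t. integral Bx (\<lambda>z. h (z + t *\<^sub>R e))) has_field_derivative
              integral Bx (\<lambda>z. h' (z + 0 *\<^sub>R e) e)) (at 0 within {-1<..<1})"
    unfolding Bx_def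
  proof (rule leibniz_rule_field_derivative[where fx="\<lambda>t z. h' (z + t *\<^sub>R e) e"])
    fix t :: real and z :: 'a
    have lin: "linear (h' (z + t *\<^sub>R e))" using hd has_derivative_linear by blast
    have "((\<lambda>t. h (z + t *\<^sub>R e)) has_derivative (\<lambda>s. h' (z + t *\<^sub>R e) (s *\<^sub>R e))) (at t within {-1<..<1})"
      by (rule has_derivative_compose[OF _ hd]) (auto intro!: derivative_eq_intros)
    moreover have "(\<lambda>s. h' (z + t *\<^sub>R e) (s *\<^sub>R e)) = (*) (h' (z + t *\<^sub>R e) e)"
      using lin by (auto simp: linear_scale fun_eq_iff)
    ultimately show "((\<lambda>t. h (z + t *\<^sub>R e)) has_field_derivative h' (z + t *\<^sub>R e) e) (at t within {-1<..<1})"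
      by (simp add: has_field_derivative_def)
  next
    fix t :: real
    show "(\<lambda>z. h (z + t *\<^sub>R e)) integrable_on cbox (-(2 *\<^sub>R One)) (2 *\<^sub>R One)"
      by (intro integrable_continuous continuous_on_compose2[OF hcont[of UNIV]] continuous_intros) auto
  next
    show "continuous_on ({-1<..<1} \<times> cbox (-(2 *\<^sub>R One)) (2 *\<^sub>R One)) (\<lambda>(t, z). h' (z + t *\<^sub>R e) e)"
      unfolding split_beta
      by (intro continuous_on_compose2[OF hc] continuous_intros) auto
  qed auto
  have der0: "((\<lambda>t. integral Bx (\<lambda>z. h (z + t *\<^sub>R e))) has_field_derivative 0) (at 0)"
  proof -
    have "((\<lambda>t. I0) has_field_derivative 0) (at (0::real))" by simp
    then show ?thesis by (rule has_field_derivative_transform_within_open[where S="{-1<..<1}"]) (auto simp: Hc)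
  qed
  have "integral Bx (\<lambda>z. h' (z + 0 *\<^sub>R e) e) = 0"
    using DERIV_unique[OF _ der0] der at_within_open[of 0 "{-1<..<1::real}"] by auto
  then show ?thesis by (simp add: Bx_def)
qed

lemma Lam_meas: "Lam \<in> borel_measurable borel"
  unfolding Lam_def[abs_def] by measurable

lemma Lam_integral:
  assumes m2: "DIM('a::euclidean_space) \<ge> 2"
  shows "((Lam :: 'a \<Rightarrow> real) has_integral unit_ball_vol (DIM('a)) / DIM('a)) UNIV"
proof -
  define m where "m = DIM('a)"
  define c where "c = unit_ball_vol (real m)"
  have c0: "c \<ge> 0" by (simp add: c_def)
  define k where "k = (\<lambda>(z::'a) (s::real). if 0 < s \<and> norm z \<le> s \<and> s \<le> 1 then ennreal (1/s) else 0)"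
  have kmeas: "(\<lambda>(z, s). k z s) \<in> borel_measurable (lborel \<Otimes>\<^sub>M lborel)"
    unfolding k_def by measurable
  have inner1: "(\<integral>\<^sup>+s. k z s \<partial>lborel) = ennreal (Lam z)" if z: "z \<noteq> 0" for z
  proof (cases "norm z \<le> 1")
    case False
    then have "k z s = 0" for s by (auto simp: k_def)
    then show ?thesis using False by (simp add: Lam_out)
  next
    case True
    have nz: "0 < norm z" using z by simp
    have "k z s = ennreal (1 / s) * indicator {norm z..1} s" for s
      using nz by (auto simp: k_def indicator_def) (metis norm_le_zero_iff not_less order_trans)
    then have "(\<integral>\<^sup>+s. k z s \<partial>lborel) = (\<integral>\<^sup>+s. ennreal (1 / s) * indicator {norm z..1} s \<partial>lborel)"
      by simp
    also have "\<dots> = ennreal (ln 1 - ln (norm z))"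
    proof (rule nn_integral_has_integral_lebesgue')
      show "((\<lambda>s. 1 / s) has_integral (ln 1 - ln (norm z))) {norm z..1}"
      proof (rule fundamental_theorem_of_calculus)
        show "norm z \<le> 1" by (rule True)
        fix x assume "x \<in> {norm z..1}"
        then have "x > 0" using nz by (auto simp del: zero_less_norm_iff)
        then show "(ln has_vector_derivative 1 / x) (at x within {norm z..1})"
          by (auto intro!: derivative_eq_intros simp: has_real_derivative_iff_has_vector_derivative[symmetric] divide_inverse)
      qed
    qed (use nz in \<open>auto simp del: zero_less_norm_iff\<close>)
    also have "ln 1 - ln (norm z) = Lam z" using True by (simp add: Lam_def)
    finally show ?thesis .
  qed
  have inner2: "(\<integral>\<^sup>+z. k z s \<partial>lborel) = ennreal (indicator {0..1} s * (c * s ^ (m - 1)))" for s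
  proof (cases "0 < s \<and> s \<le> 1")
    case True
    have "k z s = ennreal (1 / s) * indicator (cball (0::'a) s) z" for z
      using True by (auto simp: k_def indicator_def)
    then have "(\<integral>\<^sup>+z. k z s \<partial>lborel) = (\<integral>\<^sup>+z. ennreal (1 / s) * indicator (cball (0::'a) s) z \<partial>lborel)"
      by simp
    also have "\<dots> = ennreal (1 / s) * emeasure lborel (cball (0::'a) s)"
      by (rule nn_integral_cmult_indicator) simp
    also have "\<dots> = ennreal (1 / s) * ennreal (c * s ^ m)"
      using True by (simp add: emeasure_cball c_def m_def)
    also have "\<dots> = ennreal (1 / s * (c * s ^ m))"
      by (rule ennreal_mult[symmetric]) (use True c0 in auto)
    also have "1 / s * (c * s ^ m) = c * s ^ (m - 1)"
      using True m2 by (cases m) (auto simp: m_def field_simps)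
    finally show ?thesis using True by (simp add: indicator_def)
  next
    case False
    then have kz: "k z s = 0" for z by (auto simp: k_def)
    have z0: "indicator {0..1} s * (c * s ^ (m - 1)) = 0"
      using False m2 by (cases "s = 0") (auto simp: indicator_def m_def)
    show ?thesis unfolding z0 by (simp add: kz)
  qed
  have "(\<integral>\<^sup>+(z::'a). ennreal (Lam z) \<partial>lborel) = (\<integral>\<^sup>+z. (\<integral>\<^sup>+s. k z s \<partial>lborel) \<partial>lborel)"
    by (rule nn_integral_cong_AE) (use AE_lborel_singleton[of 0] inner1 in auto)
  also have "\<dots> = (\<integral>\<^sup>+s. (\<integral>\<^sup>+z. k z s \<partial>lborel) \<partial>lborel)"
    by (rule lborel_pair.Fubini'[symmetric]) (rule kmeas)
  also have "\<dots> = (\<integral>\<^sup>+s. ennreal (indicator {0..1} s * (c * s ^ (m - 1))) \<partial>lborel)"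
    by (simp add: inner2)
  also have "\<dots> = ennreal (c / m)"
  proof (rule nn_integral_has_integral_lebesgue)
    show "((\<lambda>s. c * s ^ (m - 1)) has_integral c / m) {0..1}"
    proof -
      have "((\<lambda>s. c * s ^ (m - 1)) has_integral (c * 1 ^ m / m - c * 0 ^ m / m)) {0..1}"
      proof (rule fundamental_theorem_of_calculus)
        fix x :: real assume "x \<in> {0..1}"
        show "((\<lambda>s. c * s ^ m / m) has_vector_derivative c * x ^ (m - 1)) (at x within {0..1})"
          unfolding has_real_derivative_iff_has_vector_derivative[symmetric]
          using m2 by (auto intro!: derivative_eq_intros simp: m_def)
      qed simp
      then show ?thesis using m2 by (simp add: m_def power_0_left)
    qed
  qed (use c0 in auto)
  finally have nn: "(\<integral>\<^sup>+(z::'a). ennreal (Lam z) \<partial>lborel) = ennreal (c / m)" .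
  show ?thesis
    using nn_integral_has_integral[OF Lam_meas Lam_nonneg nn] c0 by (simp add: c_def m_def)
qed

definition Pp :: "'a::real_normed_vector \<Rightarrow> 'a" where
  "Pp z = (1 / max 1 (norm z)) *\<^sub>R z"

lemma Pp_norm: "norm (Pp z) \<le> 1"
  by (simp add: Pp_def max_def field_simps)

lemma Pp_in: "norm z \<le> 1 \<Longrightarrow> Pp z = z"
  by (simp add: Pp_def max_def)

lemma Pp_cont: "continuous_on S Pp"
  unfolding Pp_def[abs_def] by (intro continuous_intros) (auto simp: max_def)

lemma Vf_out: "norm z \<ge> 1 \<Longrightarrow> Vf z = 0"
  by (simp add: Vf_def psi_def min_def one_le_power)

lemma Vf_cont: "continuous_on S (Vf :: 'a::euclidean_space \<Rightarrow> real)"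
  using Vf_deriv by (meson continuous_at_imp_continuous_on has_derivative_continuous)

lemma Lam_Pp: "Lam z *\<^sub>R Pp z = Lam z *\<^sub>R z"
  by (cases "norm z \<le> 1") (auto simp: Pp_in Lam_out)

lemma Bx_mem:
  fixes z :: "'a::euclidean_space"
  assumes "norm z < 2" shows "z \<in> cbox (-(2 *\<^sub>R One)) (2 *\<^sub>R One)"
  unfolding mem_box
proof (intro ballI conjI)
  fix i :: 'a assume i: "i \<in> Basis"
  have "\<bar>z \<bullet> i\<bar> < 2" using Basis_le_norm[OF i, of z] assms by simp
  then show "(-(2 *\<^sub>R One)) \<bullet> i \<le> z \<bullet> i" "z \<bullet> i \<le> (2 *\<^sub>R One) \<bullet> i"
    using i by (auto simp: inner_simps)
qed

lemma Lam_Bx: "z \<notin> cbox (-(2 *\<^sub>R One)) (2 *\<^sub>R One) \<Longrightarrow> Lam (z::'a::euclidean_space) = 0"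
  using Bx_mem[of z] by (intro Lam_out) (auto simp: not_less[symmetric])

lemma Lam_abs:
  assumes "DIM('a::euclidean_space) \<ge> 2"
  shows "(Lam :: 'a \<Rightarrow> real) absolutely_integrable_on cbox a b"
proof -
  have "(Lam :: 'a \<Rightarrow> real) absolutely_integrable_on UNIV"
    using Lam_integral[OF assms] Lam_nonneg by (intro nonnegative_absolutely_integrable_1) auto
  then show ?thesis by (rule absolutely_integrable_on_subcbox) simp
qed

lemma Lam_int_Bx:
  assumes "DIM('a::euclidean_space) \<ge> 2"
  shows "((Lam :: 'a \<Rightarrow> real) has_integral unit_ball_vol (DIM('a)) / DIM('a)) (cbox (-(2 *\<^sub>R One)) (2 *\<^sub>R One))"
proof -
  have "(\<lambda>z. if z \<in> cbox (-(2 *\<^sub>R One)) (2 *\<^sub>R One) then Lam z else 0) = (Lam :: 'a \<Rightarrow> real)"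
    using Lam_Bx by fastforce
  then show ?thesis using Lam_integral[OF assms] has_integral_restrict_UNIV by metis
qed

lemma prod_int:
  fixes f :: "'a::euclidean_space \<Rightarrow> real"
  assumes "DIM('a) \<ge> 2" "continuous_on (cbox a b) f"
  shows "(\<lambda>z. f z * Lam z) integrable_on cbox a b"
proof -
  have "(\<lambda>z. f z * Lam z) absolutely_integrable_on cbox a b"
  proof (rule absolutely_integrable_bounded_measurable_product[OF bilinear_times])
    show "f \<in> borel_measurable (lebesgue_on (cbox a b))"
      using assms(2) by (rule continuous_imp_measurable_on_sets_lebesgue) simp
    show "bounded (f ` cbox a b)"
      by (intro compact_imp_bounded compact_continuous_image assms(2) compact_cbox)
    show "Lam absolutely_integrable_on cbox a b" by (rule Lam_abs[OF assms(1)])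
  qed simp
  then show ?thesis by (simp add: absolutely_integrable_on_def)
qed

lemma key_ibp:
  fixes Du :: "'a::euclidean_space \<Rightarrow> ('a \<Rightarrow>\<^sub>L real)" and D2u :: "'a \<Rightarrow> ('a \<Rightarrow>\<^sub>L ('a \<Rightarrow>\<^sub>L real))"
  assumes hD2: "\<And>y. y \<in> D \<Longrightarrow> (Du has_derivative blinfun_apply (D2u y)) (at y)"
    and cDu: "continuous_on D Du" and cD2: "continuous_on D D2u"
    and lap: "\<And>y. y \<in> D \<Longrightarrow> (\<Sum>i\<in>Basis. blinfun_apply (blinfun_apply (D2u y) i) i) = 0"
    and inD: "\<And>z. x + \<rho> *\<^sub>R Pp z \<in> D"
  shows "integral (cbox (-(2 *\<^sub>R One)) (2 *\<^sub>R One)) (\<lambda>z. blinfun_apply (Du (x + \<rho> *\<^sub>R Pp z)) (Pp z) * Lam z) = 0"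
proof -
  define Bx :: "'a set" where "Bx = cbox (-(2 *\<^sub>R One)) (2 *\<^sub>R One)"
  define g where "g = (\<lambda>z. Du (x + \<rho> *\<^sub>R Pp z))"
  define g2 where "g2 = (\<lambda>z. D2u (x + \<rho> *\<^sub>R Pp z))"
  have pc: "continuous_on UNIV (\<lambda>z. x + \<rho> *\<^sub>R Pp z)"
    by (intro continuous_intros Pp_cont)
  have gc: "continuous_on UNIV g" unfolding g_def
    by (rule continuous_on_compose2[OF cDu pc]) (auto intro: inD)
  have g2c: "continuous_on UNIV g2" unfolding g2_def
    by (rule continuous_on_compose2[OF cD2 pc]) (auto intro: inD)
  define H' where "H' = (\<lambda>i z v. (- Lam z * (z \<bullet> v)) * blinfun_apply (g z) i
                               + Vf z * blinfun_apply (blinfun_apply (g2 z) (\<rho> *\<^sub>R v)) i)"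
  have H'c: "continuous_on S (\<lambda>z. H' i z i)" for i S
  proof -
    have "continuous_on S (\<lambda>z. - ((Lam z *\<^sub>R z) \<bullet> i) * blinfun_apply (g z) i
                               + Vf z * blinfun_apply (blinfun_apply (g2 z) (\<rho> *\<^sub>R i)) i)"
      by (intro continuous_intros Lam_cont_on Vf_cont continuous_on_subset[OF gc] continuous_on_subset[OF g2c]) auto
    then show ?thesis by (simp add: H'_def)
  qed
  have each: "integral Bx (\<lambda>z. H' i z i) = 0" if i: "i \<in> Basis" for i
    unfolding Bx_def
  proof (rule ibp[where h="\<lambda>z. Vf z * blinfun_apply (g z) i" and h'="H' i"])
    show "continuous_on UNIV (\<lambda>z. H' i z i)" by (rule H'c)
    show "i \<in> Basis" by (rule i)
    fix z :: 'a
    show "1 \<le> norm z \<Longrightarrow> Vf z * blinfun_apply (g z) i = 0" by (simp add: Vf_out)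
    show "((\<lambda>z. Vf z * blinfun_apply (g z) i) has_derivative H' i z) (at z)"
    proof -
      consider "norm z < 1" | "norm z = 1" | "norm z > 1" by linarith
      then show ?thesis
      proof cases
        case 1
        have zD: "x + \<rho> *\<^sub>R z \<in> D" using inD[of z] 1 by (simp add: Pp_in)
        have dG0: "((\<lambda>w. Du (x + \<rho> *\<^sub>R w)) has_derivative (\<lambda>v. blinfun_apply (D2u (x + \<rho> *\<^sub>R z)) (\<rho> *\<^sub>R v))) (at z)"
          by (rule has_derivative_compose[where f="\<lambda>w. x + \<rho> *\<^sub>R w" and x=z, OF _ hD2[OF zD]]) (auto intro!: derivative_eq_intros)
        have dG: "((\<lambda>w. blinfun_apply (Du (x + \<rho> *\<^sub>R w)) i) has_derivative
                    (\<lambda>v. blinfun_apply (blinfun_apply (D2u (x + \<rho> *\<^sub>R z)) (\<rho> *\<^sub>R v)) i)) (at z)"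
          by (rule bounded_linear.has_derivative[OF blinfun.bounded_linear_left dG0])
        have "((\<lambda>w. Vf w * blinfun_apply (Du (x + \<rho> *\<^sub>R w)) i) has_derivative H' i z) (at z)"
          using has_derivative_mult[OF Vf_deriv[of z] dG] 1
          by (simp add: H'_def g_def g2_def Pp_in algebra_simps)
        then show ?thesis
        proof (rule has_derivative_transform_within_open[where s="ball 0 1"])
          fix w :: 'a assume "w \<in> ball 0 1"
          then show "Vf w * blinfun_apply (Du (x + \<rho> *\<^sub>R w)) i = Vf w * blinfun_apply (g w) i"
            by (simp add: g_def Pp_in)
        qed (use 1 in auto)
      next
        case 2
        have V0: "(Vf has_derivative (\<lambda>v. 0)) (at z)" using Vf_deriv[of z] 2 by (simp add: Lam_out)
        have gic: "isCont (\<lambda>w. blinfun_apply (g w) i) z"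
          using gc by (intro continuous_intros) (simp add: continuous_on_eq_continuous_at)
        have "((\<lambda>w. Vf w * blinfun_apply (g w) i) has_derivative (\<lambda>v. 0)) (at z)"
          by (rule deriv_zero_mult[OF V0 _ gic]) (use 2 in \<open>simp add: Vf_out\<close>)
        moreover have "H' i z = (\<lambda>v. 0)" using 2 by (simp add: H'_def Lam_out Vf_out fun_eq_iff)
        ultimately show ?thesis by simp
      next
        case 3
        have "((\<lambda>w. 0::real) has_derivative (\<lambda>v. 0)) (at z)" by simp
        then have "((\<lambda>w. Vf w * blinfun_apply (g w) i) has_derivative (\<lambda>v. 0)) (at z)"
        proof (rule has_derivative_transform_within_open[where s="{w. 1 < norm w}"])
          show "open {w::'a. 1 < norm w}" by (intro open_Collect_less continuous_intros)
        qed (use 3 in \<open>auto simp: Vf_out\<close>)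
        moreover have "H' i z = (\<lambda>v. 0)" using 3 by (simp add: H'_def Lam_out Vf_out fun_eq_iff)
        ultimately show ?thesis by simp
      qed
    qed
  qed
  have ints: "(\<lambda>z. H' i z i) integrable_on Bx" for i
    unfolding Bx_def by (intro integrable_continuous H'c)
  have sum0: "integral Bx (\<lambda>z. \<Sum>i\<in>Basis. H' i z i) = 0"
    by (subst integral_sum) (auto simp: ints each)
  have pw: "(\<Sum>i\<in>Basis. H' i z i) = - (blinfun_apply (g z) (Pp z) * Lam z)" for z
  proof -
    have s1: "(\<Sum>i\<in>Basis. (z \<bullet> i) * blinfun_apply (g z) i) = blinfun_apply (g z) z"
    proof -
      have "blinfun_apply (g z) z = blinfun_apply (g z) (\<Sum>i\<in>Basis. (z \<bullet> i) *\<^sub>R i)"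
        by (simp add: euclidean_representation)
      also have "\<dots> = (\<Sum>i\<in>Basis. (z \<bullet> i) * blinfun_apply (g z) i)"
        by (simp add: blinfun.sum_right blinfun.scaleR_right)
      finally show ?thesis by simp
    qed
    have s2: "(\<Sum>i\<in>Basis. blinfun_apply (blinfun_apply (g2 z) (\<rho> *\<^sub>R i)) i) = 0"
    proof -
      have "(\<Sum>i\<in>Basis. blinfun_apply (blinfun_apply (g2 z) (\<rho> *\<^sub>R i)) i)
            = \<rho> * (\<Sum>i\<in>Basis. blinfun_apply (blinfun_apply (g2 z) i) i)"
        by (simp add: blinfun.scaleR_right blinfun.scaleR_left sum_distrib_left)
      also have "\<dots> = 0" using lap[OF inD[of z]] by (simp add: g2_def)
      finally show ?thesis .
    qed
    have s3: "blinfun_apply (g z) (Pp z) * Lam z = Lam z * blinfun_apply (g z) z"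
      using arg_cong[OF Lam_Pp[of z], of "blinfun_apply (g z)"]
      by (simp add: blinfun.scaleR_right mult.commute)
    have "(\<Sum>i\<in>Basis. H' i z i) = - Lam z * (\<Sum>i\<in>Basis. (z \<bullet> i) * blinfun_apply (g z) i)
           + Vf z * (\<Sum>i\<in>Basis. blinfun_apply (blinfun_apply (g2 z) (\<rho> *\<^sub>R i)) i)"
      by (simp add: H'_def sum.distrib sum_distrib_left sum_subtractf sum_negf algebra_simps)
    also have "\<dots> = - (blinfun_apply (g z) (Pp z) * Lam z)" by (simp add: s1 s2 s3)
    finally show ?thesis .
  qed
  have "integral Bx (\<lambda>z. blinfun_apply (g z) (Pp z) * Lam z) = - integral Bx (\<lambda>z. \<Sum>i\<in>Basis. H' i z i)"
    by (simp add: pw integral_neg)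
  then show ?thesis using sum0 by (simp add: Bx_def g_def)
qed

theorem theorem3:
  fixes D :: "'a::euclidean_space set" and u :: "'a \<Rightarrow> real" and x :: 'a and r :: real
  assumes "DIM('a) \<ge> 2"
    and "open D" and "connected D"
    and "harmonic_on D u"
    and "x \<in> D" and "r > 0" and "cball x r \<subseteq> D"
  shows "u x = real DIM('a) / measure lebesgue (ball x r) *
           integral (ball x r) (\<lambda>y. u y * ln (r / dist x y))"
proof -
  note m2 = assms(1)
  define m where "m = DIM('a)"
  define c where "c = unit_ball_vol (real m)"
  have cpos: "c > 0" by (simp add: c_def)
  define Bx :: "'a set" where "Bx = cbox (-(2 *\<^sub>R One)) (2 *\<^sub>R One)"
  from assms(4) obtain Du :: "'a \<Rightarrow> ('a \<Rightarrow>\<^sub>L real)" and D2u :: "'a \<Rightarrow> ('a \<Rightarrow>\<^sub>L ('a \<Rightarrow>\<^sub>L real))"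
    where hDu: "\<And>y. y \<in> D \<Longrightarrow> (u has_derivative blinfun_apply (Du y)) (at y)"
      and hD2: "\<And>y. y \<in> D \<Longrightarrow> (Du has_derivative blinfun_apply (D2u y)) (at y)"
      and cD2: "continuous_on D D2u"
      and lap0: "\<And>y. y \<in> D \<Longrightarrow> laplacian u y = 0"
    unfolding harmonic_on_def C2_on_def by blast
  have cDu: "continuous_on D Du"
    using hD2 by (meson continuous_at_imp_continuous_on has_derivative_continuous)
  have lap: "(\<Sum>i\<in>Basis. blinfun_apply (blinfun_apply (D2u y) i) i) = 0" if y: "y \<in> D" for y
  proof -
    have "frechet_derivative (\<lambda>z. frechet_derivative u (at z) i) (at y) i
          = blinfun_apply (blinfun_apply (D2u y) i) i" for i
    proof -
      have d1: "((\<lambda>z. blinfun_apply (Du z) i) has_derivative (\<lambda>v. blinfun_apply (blinfun_apply (D2u y) v) i)) (at y)"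
        by (rule bounded_linear.has_derivative[OF blinfun.bounded_linear_left hD2[OF y]])
      have d2: "((\<lambda>z. frechet_derivative u (at z) i) has_derivative (\<lambda>v. blinfun_apply (blinfun_apply (D2u y) v) i)) (at y)"
        using d1
      proof (rule has_derivative_transform_within_open[where s=D])
        fix z assume z: "z \<in> D"
        show "blinfun_apply (Du z) i = frechet_derivative u (at z) i"
          using frechet_derivative_at[OF hDu[OF z]] by simp
      qed (use assms(2) y in auto)
      show ?thesis using frechet_derivative_at[OF d2] by (metis (no_types))
    qed
    then show ?thesis using lap0[OF y] unfolding laplacian_def by simp
  qed
  obtain \<epsilon> where eps: "\<epsilon> > 0" "(\<Union>y\<in>cball x r. ball y \<epsilon>) \<subseteq> D"
    using compact_subset_open_imp_ball_epsilon_subset[OF compact_cball assms(2) assms(7)] by blast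
  define R where "R = r + \<epsilon>"
  have rR: "r < R" using eps by (simp add: R_def)
  have ballR: "ball x R \<subseteq> D"
  proof
    fix y assume y: "y \<in> ball x R"
    show "y \<in> D"
    proof (cases "dist x y \<le> r")
      case True then show ?thesis using assms(7) by auto
    next
      case False
      define d where "d = dist x y"
      have dpos: "d > r" using False by (simp add: d_def)
      then have d0: "d > 0" using assms(6) by linarith
      define y0 where "y0 = x + (r / d) *\<^sub>R (y - x)"
      have nyx: "norm (y - x) = d" by (simp add: d_def dist_norm norm_minus_commute)
      have "dist x y0 = r" using d0 assms(6) by (simp add: y0_def dist_norm nyx)
      then have y0c: "y0 \<in> cball x r" by simp
      have eq: "y - y0 = (1 - r / d) *\<^sub>R (y - x)" by (simp add: y0_def algebra_simps)
      have rd: "r / d < 1" using dpos d0 by simp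
      have "dist y0 y = norm (y - y0)" by (simp add: dist_norm norm_minus_commute)
      also have "\<dots> = \<bar>1 - r / d\<bar> * d" by (simp add: eq nyx)
      also have "\<dots> = (1 - r / d) * d" using rd by simp
      also have "\<dots> = d - r" using d0 by (simp add: field_simps)
      also have "\<dots> < \<epsilon>" using y by (simp add: R_def d_def)
      finally have "y \<in> ball y0 \<epsilon>" by simp
      then show ?thesis using eps(2) y0c by blast
    qed
  qed
  have inD: "x + \<rho> *\<^sub>R Pp z \<in> D" if "\<bar>\<rho>\<bar> < R" for \<rho> z
  proof -
    have "norm (\<rho> *\<^sub>R Pp z) \<le> \<bar>\<rho>\<bar>" using Pp_norm[of z]
      by (simp add: mult_left_le)
    then have "x + \<rho> *\<^sub>R Pp z \<in> ball x R" using that by (simp add: dist_norm)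
    then show ?thesis using ballR by blast
  qed
  define G where "G = (\<lambda>\<rho>. integral Bx (\<lambda>z. u (x + \<rho> *\<^sub>R Pp z) * Lam z))"
  define U where "U = {-R<..<R}"
  have cu: "continuous_on D u"
    using hDu by (meson continuous_at_imp_continuous_on has_derivative_continuous)
  have fcont: "continuous_on S (\<lambda>z. u (x + \<rho> *\<^sub>R Pp z))" if "\<bar>\<rho>\<bar> < R" for \<rho> S
    by (rule continuous_on_compose2[OF cu, where f="\<lambda>z. x + \<rho> *\<^sub>R Pp z"])
       (auto intro!: continuous_intros Pp_cont inD that)
  have fint: "(\<lambda>z. u (x + \<rho> *\<^sub>R Pp z) * Lam z) integrable_on Bx" if "\<bar>\<rho>\<bar> < R" for \<rho>
    unfolding Bx_def by (rule prod_int[OF m2 fcont[OF that]])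
  have Gder: "(G has_field_derivative 0) (at \<rho> within U)" if \<rho>U: "\<rho> \<in> U" for \<rho>
  proof -
    have "(G has_field_derivative integral Bx (\<lambda>z. blinfun_apply (Du (x + \<rho> *\<^sub>R Pp z)) (Pp z) * Lam z)) (at \<rho> within U)"
      unfolding G_def Bx_def
    proof (rule leibniz_rule_field_derivative[where fx="\<lambda>\<rho> z. blinfun_apply (Du (x + \<rho> *\<^sub>R Pp z)) (Pp z) * Lam z"])
      fix t z assume t: "t \<in> U"
      have tR: "\<bar>t\<bar> < R" using t by (auto simp: U_def)
      have "((\<lambda>t. u (x + t *\<^sub>R Pp z)) has_derivative (\<lambda>s. blinfun_apply (Du (x + t *\<^sub>R Pp z)) (s *\<^sub>R Pp z))) (at t within U)"
        by (rule has_derivative_compose[where f="\<lambda>t. x + t *\<^sub>R Pp z" and x=t, OF _ hDu[OF inD[OF tR]]])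
           (auto intro!: derivative_eq_intros)
      then have "((\<lambda>t. u (x + t *\<^sub>R Pp z) * Lam z) has_derivative (\<lambda>s. blinfun_apply (Du (x + t *\<^sub>R Pp z)) (s *\<^sub>R Pp z) * Lam z)) (at t within U)"
        by (rule has_derivative_mult_left)
      moreover have "(\<lambda>s. blinfun_apply (Du (x + t *\<^sub>R Pp z)) (s *\<^sub>R Pp z) * Lam z) = (*) (blinfun_apply (Du (x + t *\<^sub>R Pp z)) (Pp z) * Lam z)"
        by (simp add: fun_eq_iff blinfun.scaleR_right)
      ultimately show "((\<lambda>t. u (x + t *\<^sub>R Pp z) * Lam z) has_field_derivative blinfun_apply (Du (x + t *\<^sub>R Pp z)) (Pp z) * Lam z) (at t within U)"
        by (simp add: has_field_derivative_def)
    next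
      fix t assume t: "t \<in> U"
      then show "(\<lambda>z. u (x + t *\<^sub>R Pp z) * Lam z) integrable_on cbox (-(2 *\<^sub>R One)) (2 *\<^sub>R One)"
        using fint[of t] by (auto simp: U_def Bx_def)
    next
      have pc: "continuous_on (U \<times> cbox (-(2 *\<^sub>R One)) (2 *\<^sub>R One)) (\<lambda>p. x + fst p *\<^sub>R Pp (snd p))"
        by (intro continuous_intros continuous_on_compose2[OF Pp_cont[of UNIV]]) auto
      have "continuous_on (U \<times> cbox (-(2 *\<^sub>R One)) (2 *\<^sub>R One)) (\<lambda>p. blinfun_apply (Du (x + fst p *\<^sub>R Pp (snd p))) (Lam (snd p) *\<^sub>R snd p))"
        by (intro blinfun.continuous_on continuous_on_compose2[OF cDu pc] continuous_on_compose2[OF Lam_cont_on[of UNIV]] continuous_intros)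
           (auto simp: U_def intro!: inD)
      then show "continuous_on (U \<times> cbox (-(2 *\<^sub>R One)) (2 *\<^sub>R One)) (\<lambda>(t, z). blinfun_apply (Du (x + t *\<^sub>R Pp z)) (Pp z) * Lam z)"
      proof (rule continuous_on_eq)
        fix p :: "real \<times> 'a"
        have "blinfun_apply (Du (x + fst p *\<^sub>R Pp (snd p))) (Lam (snd p) *\<^sub>R snd p)
              = blinfun_apply (Du (x + fst p *\<^sub>R Pp (snd p))) (Lam (snd p) *\<^sub>R Pp (snd p))"
          by (simp add: Lam_Pp)
        then show "blinfun_apply (Du (x + fst p *\<^sub>R Pp (snd p))) (Lam (snd p) *\<^sub>R snd p) =
              (case p of (t, z) \<Rightarrow> blinfun_apply (Du (x + t *\<^sub>R Pp z)) (Pp z) * Lam z)"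
          by (simp add: split_beta blinfun.scaleR_right mult.commute)
      qed
    qed (use \<rho>U in \<open>auto simp: U_def\<close>)
    moreover have "integral Bx (\<lambda>z. blinfun_apply (Du (x + \<rho> *\<^sub>R Pp z)) (Pp z) * Lam z) = 0"
      unfolding Bx_def
      by (rule key_ibp[OF hD2 cDu cD2 lap]) (use \<rho>U in \<open>auto simp: U_def intro!: inD\<close>)
    ultimately show ?thesis by simp
  qed
  obtain C where C: "\<forall>\<rho>\<in>U. G \<rho> = C"
    using has_field_derivative_zero_constant[of U G] Gder by (auto simp: U_def)
  have GrG0: "G r = G 0" using C rR assms(6) by (auto simp: U_def)
  have G0: "G 0 = u x * (c / m)"
  proof -
    have "G 0 = integral Bx (\<lambda>z. u x * Lam z)" by (simp add: G_def)
    also have "\<dots> = u x * integral Bx Lam" by simp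
    also have "integral Bx Lam = c / m"
      unfolding Bx_def c_def m_def by (rule integral_unique[OF Lam_int_Bx[OF m2]])
    finally show ?thesis .
  qed
  define F where "F = (\<lambda>y. if y \<in> ball x r then u y * ln (r / dist x y) else 0)"
  have Fz: "F (r *\<^sub>R z + x) = u (x + r *\<^sub>R Pp z) * Lam z" for z
  proof (cases "norm z < 1")
    case True
    have d: "dist x (r *\<^sub>R z + x) = r * norm z" using assms(6) by (simp add: dist_norm)
    have l: "ln (r / (r * norm z)) = Lam z"
    proof (cases "z = 0")
      case True then show ?thesis by (simp add: Lam_def)
    next
      case False
      then have "r / (r * norm z) = 1 / norm z" using assms(6) by simp
      then show ?thesis using False True by (simp add: Lam_in ln_div)
    qed
    have "r *\<^sub>R z + x \<in> ball x r" using d True assms(6) by simp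
    then show ?thesis using d l True by (simp add: F_def Pp_in add.commute)
  next
    case False
    have d: "dist x (r *\<^sub>R z + x) = r * norm z" using assms(6) by (simp add: dist_norm)
    then have "r *\<^sub>R z + x \<notin> ball x r" using False assms(6) by (simp add: not_less)
    then show ?thesis using False by (simp add: F_def Lam_out)
  qed
  have hGr: "((\<lambda>z. u (x + r *\<^sub>R Pp z) * Lam z) has_integral G r) Bx"
    unfolding G_def using fint[of r] rR assms(6) by (intro integrable_integral) auto
  define a where "a = x + r *\<^sub>R (-(2 *\<^sub>R One))"
  define b where "b = x + r *\<^sub>R (2 *\<^sub>R One)"
  have ab: "(a - x) /\<^sub>R r = -(2 *\<^sub>R One)" "(b - x) /\<^sub>R r = 2 *\<^sub>R One"
    using assms(6) by (auto simp: a_def b_def)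
  have "((\<lambda>z. F (r *\<^sub>R z + x)) has_integral ((r ^ m * G r) /\<^sub>R r ^ DIM('a))) (cbox ((a - x) /\<^sub>R r) ((b - x) /\<^sub>R r))"
  proof -
    have e: "(r ^ m * G r) /\<^sub>R r ^ DIM('a) = G r" using assms(6) by (simp add: m_def)
    show ?thesis using hGr unfolding ab e Bx_def by (simp add: Fz)
  qed
  then have hF: "(F has_integral (r ^ m * G r)) (cbox a b)"
    using has_integral_affinity_iff[OF assms(6)] by blast
  have sub: "ball x r \<subseteq> cbox a b"
  proof
    fix y assume y: "y \<in> ball x r"
    show "y \<in> cbox a b" unfolding mem_box
    proof (intro ballI conjI)
      fix i :: 'a assume i: "i \<in> Basis"
      have "\<bar>(y - x) \<bullet> i\<bar> < r" using Basis_le_norm[OF i, of "y - x"] y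
        by (simp add: dist_norm norm_minus_commute)
      then show "a \<bullet> i \<le> y \<bullet> i" "y \<bullet> i \<le> b \<bullet> i"
        using i assms(6) by (auto simp: a_def b_def inner_simps)
    qed
  qed
  have "((\<lambda>y. u y * ln (r / dist x y)) has_integral (r ^ m * G r)) (ball x r)"
    using hF has_integral_restrict[OF sub] unfolding F_def by blast
  then have T: "integral (ball x r) (\<lambda>y. u y * ln (r / dist x y)) = r ^ m * (u x * (c / m))"
    using GrG0 G0 by (simp add: integral_unique)
  have meas: "measure lebesgue (ball x r) = c * r ^ m"
    using content_ball[of r x] assms(6) by (simp add: c_def m_def)
  show ?thesis unfolding T meas m_def[symmetric] using cpos assms(6) m2
    by (simp add: field_simps m_def)
qed

end
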